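(* For every integer $t\ge 2$ and positive integers $d,k$ there exists an integer $m=m(t,k,d)\le k^{2^{d-1}}+t-1$ with the following property: the (unordered) $t$-tuples of every finite point set $S\subset\mathbb{R}^d$ can be $k$-colored such that every axis-parallel box in $\mathbb{R}^d$ that contains at least $m$ points of $S$ contains $t$-tuples of points of $S$ colored with each of the $k$ colors.
   Context: An axis-parallel closed halfspace in $\mathbb{R}^d$ is a set $\{\mathbf{p}\mid (\mathbf{p})_i\le\beta\}$ or $\{\mathbf{p}\mid (\mathbf{p})_i\ge\beta\}$ for some coordinate $1\le i\le d$ and real $\beta$; an axis-parallel box is an intersection of such halfspaces. A $t$-tuple of points of $S$ is a $t$-element subset of $S$; a box contains it if it contains all its points. *)

theory Defs
  imports "HOL-Analysis.Analysis"
begin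

definition axis_halfspace :: "(real ^ 'n) set \<Rightarrow> bool" where
  "axis_halfspace H \<longleftrightarrow>
     (\<exists>i \<beta>. H = {p. p $ i \<le> \<beta>} \<or> H = {p. p $ i \<ge> \<beta>})"

definition axis_box :: "(real ^ 'n) set \<Rightarrow> bool" where
  "axis_box B \<longleftrightarrow> (\<exists>\<H>. (\<forall>H\<in>\<H>. axis_halfspace H) \<and> B = \<Inter>\<H>)"

definition tuples :: "nat \<Rightarrow> 'a set \<Rightarrow> 'a set set" where
  "tuples t S = {T. T \<subseteq> S \<and> card T = t}"

end

theory Submission
  imports Defs
begin

definition sig :: "real^'n \<Rightarrow> real^'n \<Rightarrow> 'n set" where
  "sig p q = {i. q$i < p$i}"

lemma box_between:
  assumes "axis_box B" "x \<in> B" "y \<in> B"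
    and "\<And>j. min (x$j) (y$j) \<le> z$j \<and> z$j \<le> max (x$j) (y$j)"
  shows "z \<in> B"
proof -
  obtain HH where HH: "\<forall>H\<in>HH. axis_halfspace H" "B = \<Inter>HH"
    using assms(1) unfolding axis_box_def by blast
  have "z \<in> H" if "H \<in> HH" for H
  proof -
    have xH: "x \<in> H" and yH: "y \<in> H" using assms(2,3) HH(2) that by auto
    have "axis_halfspace H" using HH(1) that by simp
    then obtain i \<beta> where "H = {p. p $ i \<le> \<beta>} \<or> H = {p. p $ i \<ge> \<beta>}"
      unfolding axis_halfspace_def by (elim exE) (rule that)
    then show ?thesis
    proof
      assume h: "H = {p. p $ i \<le> \<beta>}"
      have m: "z$i \<le> max (x$i) (y$i)" using assms(4) by blast
      have "x$i \<le> \<beta>" "y$i \<le> \<beta>" using xH yH h by simp_all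
      then have "z$i \<le> \<beta>" using m by (simp add: max_def split: if_splits)
      then show ?thesis using h by simp
    next
      assume h: "H = {p. p $ i \<ge> \<beta>}"
      have m: "min (x$i) (y$i) \<le> z$i" using assms(4) by blast
      have "x$i \<ge> \<beta>" "y$i \<ge> \<beta>" using xH yH h by simp_all
      then have "z$i \<ge> \<beta>" using m by (simp add: min_def split: if_splits)
      then show ?thesis using h by simp
    qed
  qed
  then show ?thesis using HH(2) by blast
qed

lemma sorted_wrt_last:
  assumes "sorted_wrt r xs" "z \<in> set xs"
  shows "z = last xs \<or> r z (last xs)"
proof -
  obtain a where a: "a < length xs" "z = xs!a" using assms(2) by (metis in_set_conv_nth)
  show ?thesis
  proof (cases "a = length xs - 1")
    case True then show ?thesis using a by (metis last_conv_nth length_greater_0_conv less_nat_zero_code list.size(3))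
  next
    case False
    then have "a < length xs - 1" using a by linarith
    then have "r (xs!a) (xs!(length xs - 1))" using assms(1) sorted_wrt_nth_less by fastforce
    then show ?thesis using a by (metis last_conv_nth length_greater_0_conv list.size(3) not_less_zero)
  qed
qed

lemma sorted_wrt_hd:
  assumes "sorted_wrt r xs" "z \<in> set xs"
  shows "z = hd xs \<or> r (hd xs) z"
  using assms by (cases xs) auto

locale ord_setup =
  fixes S :: "(real^'n) set" and g :: "real^'n \<Rightarrow> nat" and i0 :: 'n
  assumes fin: "finite S" and inj: "inj_on g S"
begin

definition lt where "lt p q \<longleftrightarrow> p$i0 < q$i0 \<or> (p$i0 = q$i0 \<and> g p < g q)"
definition rel where "rel s p q \<longleftrightarrow> lt p q \<and> sig p q = s"

lemma lt_asym: "lt p q \<Longrightarrow> \<not> lt q p" unfolding lt_def by auto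
lemma lt_irrefl: "\<not> lt p p" unfolding lt_def by auto
lemma lt_trans: "lt p q \<Longrightarrow> lt q r \<Longrightarrow> lt p r" unfolding lt_def by auto
lemma lt_total: "p \<in> S \<Longrightarrow> q \<in> S \<Longrightarrow> p \<noteq> q \<Longrightarrow> lt p q \<or> lt q p"
  unfolding lt_def using inj by (metis inj_on_def linorder_neqE_linordered_idom nat_neq_iff)
lemma lt_i0: "lt p q \<Longrightarrow> p$i0 \<le> q$i0" unfolding lt_def by auto

lemma rel_trans: "rel s p q \<Longrightarrow> rel s q r \<Longrightarrow> rel s p r"
  unfolding rel_def sig_def using lt_trans by (auto simp: set_eq_iff) (meson less_trans not_less order_trans)+
lemma rel_irrefl: "\<not> rel s p p" unfolding rel_def using lt_irrefl by auto

lemma chain_distinct: "sorted_wrt (rel s) xs \<Longrightarrow> distinct xs"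
  by (induction xs) (auto simp: rel_irrefl)

lemma chain_len: "sorted_wrt (rel s) xs \<Longrightarrow> set xs \<subseteq> X \<Longrightarrow> finite X \<Longrightarrow> length xs \<le> card X"
  by (metis card_mono chain_distinct distinct_card)

lemma ES:
  assumes XS: "X \<subseteq> S" and big: "k ^ (2 ^ (CARD('n) - 1)) < card X"
  shows "\<exists>s xs. sorted_wrt (rel s) xs \<and> set xs \<subseteq> X \<and> k + 1 \<le> length xs"
proof (rule ccontr)
  assume no: "\<not> ?thesis"
  have finX: "finite X" using XS fin finite_subset by blast
  define C where "C s x = {length xs | xs. sorted_wrt (rel s) xs \<and> set xs \<subseteq> X \<and> xs \<noteq> [] \<and> last xs = x}" for s x
  define L where "L s x = Max (C s x)" for s x
  have Cfin: "finite (C s x)" for s x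
  proof -
    have "C s x \<subseteq> {..card X}" unfolding C_def using chain_len finX by auto
    then show ?thesis using finite_subset by blast
  qed
  have Cne: "C s x \<noteq> {}" if "x \<in> X" for s x
  proof -
    have "length [x] \<in> C s x" unfolding C_def using that by fastforce
    then show ?thesis by blast
  qed
  have Lwit: "\<exists>xs. sorted_wrt (rel s) xs \<and> set xs \<subseteq> X \<and> xs \<noteq> [] \<and> last xs = x \<and> length xs = L s x"
    if "x \<in> X" for s x
  proof -
    have "L s x \<in> C s x" unfolding L_def using Max_in[OF Cfin Cne[OF that]] .
    then show ?thesis unfolding C_def by auto
  qed
  have Lge: "length xs \<le> L s x" if "sorted_wrt (rel s) xs" "set xs \<subseteq> X" "xs \<noteq> []" "last xs = x" for s x xs
  proof -
    have "length xs \<in> C s x" unfolding C_def using that by blast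
    then show ?thesis unfolding L_def using Max_ge[OF Cfin] by blast
  qed
  have Lrange: "L s x \<in> {1..k}" if xX: "x \<in> X" for s x
  proof -
    obtain xs where xs: "sorted_wrt (rel s) xs" "set xs \<subseteq> X" "xs \<noteq> []" "length xs = L s x" "last xs = x"
      using Lwit[OF xX] by blast
    have "length xs \<le> k" using no xs by fastforce
    moreover have "1 \<le> length xs" using xs(3) by (cases xs) auto
    ultimately show ?thesis using xs(4) by auto
  qed
  have Linc: "L s x < L s y" if hx: "x \<in> X" "y \<in> X" "rel s x y" for s x y
  proof -
    obtain xs where xs: "sorted_wrt (rel s) xs" "set xs \<subseteq> X" "xs \<noteq> []" "last xs = x" "length xs = L s x"
      using Lwit[OF hx(1)] by blast
    have "\<forall>z\<in>set xs. rel s z y"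
      using sorted_wrt_last[OF xs(1)] xs(4) hx(3) rel_trans by blast
    then have "sorted_wrt (rel s) (xs @ [y])" using xs(1) by (simp add: sorted_wrt_append)
    then have "length (xs @ [y]) \<le> L s y" by (rule Lge) (use xs(2) hx(2) in auto)
    then show ?thesis using xs(5) by simp
  qed
  define Sig where "Sig = Pow (UNIV - {i0})"
  define f where "f x = restrict (\<lambda>s. L s x) Sig" for x
  have inj: "inj_on f X"
  proof (rule inj_onI)
    fix x y assume xy: "x \<in> X" "y \<in> X" "f x = f y"
    show "x = y"
    proof (rule ccontr)
      assume "x \<noteq> y"
      then have "lt x y \<or> lt y x" using lt_total XS xy by blast
      then obtain a b where ab: "a\<in>X" "b\<in>X" "lt a b" "f a = f b" using xy by metis
      define s where "s = sig a b"
      have "i0 \<notin> s" using lt_i0[OF ab(3)] unfolding s_def sig_def by auto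
      then have sS: "s \<in> Sig" unfolding Sig_def by auto
      have "rel s a b" unfolding rel_def s_def using ab(3) by simp
      then have "L s a < L s b" using Linc ab by blast
      moreover have "L s a = L s b" using ab(4) sS unfolding f_def by (metis restrict_apply')
      ultimately show False by simp
    qed
  qed
  have sub: "f ` X \<subseteq> PiE Sig (\<lambda>_. {1..k})" using Lrange by (auto simp: f_def)
  have finSig: "finite Sig" unfolding Sig_def by simp
  have "card X = card (f ` X)" using inj by (simp add: card_image)
  also have "\<dots> \<le> card (PiE Sig (\<lambda>_. {1..k}))"
    by (rule card_mono) (use finSig sub in \<open>auto intro: finite_PiE\<close>)
  also have "\<dots> = k ^ card Sig" using finSig by (simp add: card_PiE)
  also have "card Sig = 2 ^ (CARD('n) - 1)" unfolding Sig_def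
    by (simp add: card_Pow card_Diff_singleton)
  finally show False using big by simp
qed

lemma max_elem:
  assumes "finite A" "A \<noteq> {}" "A \<subseteq> S"
  shows "\<exists>z\<in>A. \<forall>x\<in>A-{z}. lt x z"
  using assms
proof (induction A rule: finite_ne_induct)
  case (singleton x) then show ?case by auto
next
  case (insert x F)
  then obtain z where z: "z \<in> F" "\<forall>y\<in>F-{z}. lt y z" by auto
  show ?case
  proof (cases "lt z x")
    case True
    then show ?thesis using z lt_trans by (metis Diff_iff insert_iff singletonD)
  next
    case False
    then have "x \<noteq> z \<Longrightarrow> lt x z" using lt_total insert.prems insert.hyps z(1) by blast
    then show ?thesis using z by auto
  qed
qed

lemma top_set:
  assumes "P \<subseteq> S" "n \<le> card P"
  shows "\<exists>R. R \<subseteq> P \<and> card R = n \<and> (\<forall>x\<in>P-R. \<forall>y\<in>R. lt x y)"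
  using assms(2)
proof (induction n)
  case 0 then show ?case by auto
next
  case (Suc n)
  then obtain R where R: "R \<subseteq> P" "card R = n" "\<forall>x\<in>P-R. \<forall>y\<in>R. lt x y" by auto
  have finP: "finite P" using assms(1) fin finite_subset by blast
  have "card R < card P" using R(2) Suc.prems by simp
  then have "P - R \<noteq> {}"
  proof (intro notI)
    assume "P - R = {}"
    then have "P \<subseteq> R" by blast
    then have "card P \<le> card R" using R(1) finP finite_subset card_mono by blast
    then show False using \<open>card R < card P\<close> by simp
  qed
  then obtain z where z: "z \<in> P - R" "\<forall>x\<in>(P-R)-{z}. lt x z"
    using max_elem[of "P - R"] finP assms(1) by blast
  have "finite R" using R(1) finP finite_subset by blast
  then have "card (insert z R) = Suc n" using z R(2) by simp
  moreover have "\<forall>x\<in>P - insert z R. \<forall>y\<in>insert z R. lt x y" using R(3) z by auto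
  moreover have "insert z R \<subseteq> P" using R(1) z(1) by blast
  ultimately show ?case by blast
qed

definition h where
  "h s a b = Max {length xs | xs. sorted_wrt (rel s) xs \<and> set xs \<subseteq> S \<and> xs \<noteq> [] \<and> hd xs = a \<and> last xs = b}"
definition two where
  "two T a b \<longleftrightarrow> a \<in> T \<and> b \<in> T \<and> lt a b \<and> (\<forall>x\<in>T-{a,b}. lt b x)"
definition col where
  "col k T = (case (SOME ab. two T (fst ab) (snd ab)) of (a,b) \<Rightarrow> h (sig a b) a b mod k)"

lemma two_unique: "two T a b \<Longrightarrow> two T a' b' \<Longrightarrow> a = a' \<and> b = b'"
proof -
  assume A: "two T a b" and A': "two T a' b'"
  have mn: "lt a x" if "x \<in> T" "x \<noteq> a" for x
  proof (cases "x = b")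
    case True then show ?thesis using A unfolding two_def by simp
  next
    case False then have "lt b x" using A that unfolding two_def by blast
    then show ?thesis using A lt_trans unfolding two_def by blast
  qed
  have mn': "lt a' x" if "x \<in> T" "x \<noteq> a'" for x
  proof (cases "x = b'")
    case True then show ?thesis using A' unfolding two_def by simp
  next
    case False then have "lt b' x" using A' that unfolding two_def by blast
    then show ?thesis using A' lt_trans unfolding two_def by blast
  qed
  have aa: "a = a'"
  proof (rule ccontr)
    assume "a \<noteq> a'"
    then have "lt a a'" "lt a' a" using mn mn' A A' unfolding two_def by auto
    then show False using lt_asym by blast
  qed
  have "b = b'"
  proof (rule ccontr)
    assume ne: "b \<noteq> b'"
    have "b \<noteq> a" "b' \<noteq> a" using A A' aa lt_irrefl unfolding two_def by auto
    then have "lt b b'" "lt b' b" using ne A A' aa unfolding two_def by auto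
    then show False using lt_asym by blast
  qed
  then show ?thesis using aa by simp
qed

lemma col_eq: assumes "two T a b" shows "col k T = h (sig a b) a b mod k"
proof -
  have "two T (fst (a,b)) (snd (a,b))" using assms by simp
  then have "two T (fst (SOME ab. two T (fst ab) (snd ab))) (snd (SOME ab. two T (fst ab) (snd ab)))"
    by (rule someI)
  then have "fst (SOME ab. two T (fst ab) (snd ab)) = a \<and> snd (SOME ab. two T (fst ab) (snd ab)) = b"
    using two_unique[OF _ assms] by blast
  then have "(SOME ab. two T (fst ab) (snd ab)) = (a,b)" by (simp add: prod_eq_iff)
  then show ?thesis unfolding col_def by simp
qed

lemma between:
  assumes "rel s a b" "z = a \<or> rel s a z" "z = b \<or> rel s z b"
  shows "min (a$j) (b$j) \<le> z$j \<and> z$j \<le> max (a$j) (b$j)"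
proof -
  have e1: "j \<in> s \<longleftrightarrow> b$j < a$j" using assms(1) unfolding rel_def sig_def by auto
  have e2: "z \<noteq> a \<Longrightarrow> j \<in> s \<longleftrightarrow> z$j < a$j" using assms(2) unfolding rel_def sig_def by auto
  have e3: "z \<noteq> b \<Longrightarrow> j \<in> s \<longleftrightarrow> b$j < z$j" using assms(3) unfolding rel_def sig_def by auto
  show ?thesis using e1 e2 e3 by (cases "z = a"; cases "z = b"; cases "j \<in> s") auto
qed

lemma main:
  assumes B: "axis_box B" and cardB: "k ^ (2 ^ (CARD('n) - 1)) + t - 1 \<le> card (S \<inter> B)"
    and t: "t \<ge> 2" and k: "k \<ge> 1" and j: "j < k"
  shows "\<exists>T\<in>tuples t (S \<inter> B). col k T = j"
proof -
  define P where "P = S \<inter> B"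
  have finP: "finite P" using fin P_def by simp
  have PS: "P \<subseteq> S" by (simp add: P_def)
  have "t - 2 \<le> card P" using cardB t unfolding P_def by linarith
  then obtain R where R: "R \<subseteq> P" "card R = t - 2" "\<forall>x\<in>P-R. \<forall>y\<in>R. lt x y"
    using top_set[OF PS] by blast
  define Q where "Q = P - R"
  have finR: "finite R" using R(1) finP finite_subset by blast
  have cardQ: "card Q = card P - (t-2)" unfolding Q_def using R finR by (simp add: card_Diff_subset)
  have bigQ: "k ^ (2 ^ (CARD('n) - 1)) < card Q" using cardB t cardQ unfolding P_def by linarith
  have QS: "Q \<subseteq> S" using PS Q_def by auto
  have finQ: "finite Q" using finP Q_def by simp
  obtain s xs0 where xs0: "sorted_wrt (rel s) xs0" "set xs0 \<subseteq> Q" "k+1 \<le> length xs0"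
    using ES[OF QS bigQ] by blast
  define Cs where "Cs = {length ys | ys. sorted_wrt (rel s) ys \<and> set ys \<subseteq> Q}"
  have finCs: "finite Cs"
  proof -
    have "Cs \<subseteq> {..card Q}" unfolding Cs_def using chain_len finQ by auto
    then show ?thesis using finite_subset by blast
  qed
  have "length xs0 \<in> Cs" unfolding Cs_def using xs0 by blast
  then have Csne: "Cs \<noteq> {}" by blast
  have "Max Cs \<in> Cs" using Max_in[OF finCs Csne] .
  then obtain cs where cs: "sorted_wrt (rel s) cs" "set cs \<subseteq> Q" "length cs = Max Cs"
    unfolding Cs_def by auto
  have csmax: "length ys \<le> length cs" if "sorted_wrt (rel s) ys" "set ys \<subseteq> Q" for ys
  proof -
    have "length ys \<in> Cs" unfolding Cs_def using that by blast
    then show ?thesis using cs(3) Max_ge[OF finCs] by simp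
  qed
  have lencs: "k + 1 \<le> length cs" using csmax[OF xs0(1,2)] xs0(3) by simp
  obtain i where i: "1 \<le> i" "i \<le> k" "(i+1) mod k = j"
  proof (cases "k = 1")
    case True then show ?thesis using that[of 1] j by simp
  next
    case False
    then have k2: "k \<ge> 2" using k by simp
    show ?thesis
    proof (cases "j = 0")
      case True then show ?thesis using that[of "k-1"] k2 by simp
    next
      case False
      show ?thesis
      proof (cases "j = 1")
        case True then show ?thesis using that[of k] k2 by (simp add: mod_Suc)
      next
        case False
        then show ?thesis using that[of "j-1"] \<open>j \<noteq> 0\<close> j by simp
      qed
    qed
  qed
  define a where "a = cs!0"
  define b where "b = cs!i"
  have ilt: "i < length cs" using i lencs by simp
  have ab: "rel s a b" unfolding a_def b_def using sorted_wrt_nth_less[OF cs(1)] i ilt by simp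
  have "0 < length cs" using ilt by linarith
  then have "cs ! 0 \<in> set cs" by (rule nth_mem)
  then have aQ: "a \<in> Q" unfolding a_def using cs(2) by blast
  have bQ: "b \<in> Q" unfolding b_def using cs(2) ilt by auto
  have hval: "h s a b = i + 1"
  proof -
    define H where "H = {length xs | xs. sorted_wrt (rel s) xs \<and> set xs \<subseteq> S \<and> xs \<noteq> [] \<and> hd xs = a \<and> last xs = b}"
    have finH: "finite H"
    proof -
      have "H \<subseteq> {..card S}" unfolding H_def using chain_len fin by auto
      then show ?thesis using finite_subset by blast
    qed
    have inH: "i + 1 \<in> H"
    proof -
      have "sorted_wrt (rel s) (take (Suc i) cs)" using cs(1) by (simp add: sorted_wrt_take)
      moreover have "set (take (Suc i) cs) \<subseteq> S" using cs(2) QS by (meson order_trans set_take_subset)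
      moreover have "take (Suc i) cs \<noteq> []" using ilt by (cases cs) auto
      moreover have "hd (take (Suc i) cs) = a" unfolding a_def using ilt by (cases cs) auto
      moreover have "last (take (Suc i) cs) = b" unfolding b_def using ilt by (simp add: take_Suc_conv_app_nth)
      moreover have "length (take (Suc i) cs) = i + 1" using ilt by simp
      ultimately show ?thesis unfolding H_def by (metis (mono_tags, lifting) mem_Collect_eq)
    qed
    have leH: "l \<le> i + 1" if "l \<in> H" for l
    proof -
      obtain ys where ys: "sorted_wrt (rel s) ys" "set ys \<subseteq> S" "ys \<noteq> []" "hd ys = a" "last ys = b" "l = length ys"
        using \<open>l \<in> H\<close> unfolding H_def by blast
      have zb: "z = b \<or> rel s z b" if "z \<in> set ys" for z
        using sorted_wrt_last[OF ys(1) that] ys(5) by simp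
      have yQ: "set ys \<subseteq> Q"
      proof
        fix z assume z: "z \<in> set ys"
        have za: "z = a \<or> rel s a z" using sorted_wrt_hd[OF ys(1) z] ys(4) by simp
        have "z \<in> B"
          by (rule box_between[OF B, of a b]) (use aQ bQ between[OF ab za zb[OF z]] in \<open>auto simp: Q_def P_def\<close>)
        then have zP: "z \<in> P" using z ys(2) P_def by auto
        have "z \<notin> R"
        proof
          assume "z \<in> R"
          then have "lt b z" using R(3) bQ Q_def by auto
          then show False using zb[OF z] lt_asym lt_irrefl unfolding rel_def by blast
        qed
        then show "z \<in> Q" using zP Q_def by auto
      qed
      have "sorted_wrt (rel s) (ys @ drop (Suc i) cs)"
      proof -
        have "rel s b w" if wD: "w \<in> set (drop (Suc i) cs)" for w
        proof -
          obtain m where m: "m < length (drop (Suc i) cs)" "w = drop (Suc i) cs ! m"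
            using wD by (metis in_set_conv_nth)
          then have "w = cs ! (Suc i + m)" "Suc i + m < length cs" by auto
          then show ?thesis unfolding b_def using sorted_wrt_nth_less[OF cs(1)] by simp
        qed
        then have "\<forall>y\<in>set ys. \<forall>w\<in>set (drop (Suc i) cs). rel s y w"
          using zb rel_trans by blast
        then show ?thesis using ys(1) cs(1) by (simp add: sorted_wrt_append sorted_wrt_drop)
      qed
      moreover have "set (ys @ drop (Suc i) cs) \<subseteq> Q" using yQ cs(2) by (auto dest: in_set_dropD)
      ultimately have "length (ys @ drop (Suc i) cs) \<le> length cs" using csmax by blast
      then show ?thesis using ys(6) ilt by simp
    qed
    have "Max H = i + 1" using Max_eqI[OF finH leH inH] .
    then show ?thesis unfolding h_def H_def .
  qed
  define T where "T = insert a (insert b R)"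
  have aR: "a \<notin> R" and bR: "b \<notin> R" using aQ bQ Q_def by auto
  have anb: "a \<noteq> b" using ab rel_irrefl by blast
  have cardT: "card T = t" unfolding T_def using aR bR anb finR R(2) t by simp
  have TSB: "T \<subseteq> S \<inter> B" unfolding T_def using aQ bQ R(1) Q_def P_def by auto
  have two: "two T a b" unfolding two_def T_def using ab R(3) bQ Q_def unfolding rel_def by auto
  have "sig a b = s" using ab rel_def by simp
  then have "col k T = j" using col_eq[OF two] hval i(3) by simp
  moreover have "T \<in> tuples t (S \<inter> B)" unfolding tuples_def using cardT TSB by simp
  ultimately show ?thesis by blast
qed

end
theorem theorem8:
  fixes t k :: nat
  assumes "t \<ge> 2" and "k \<ge> 1"
  shows "\<exists>m::nat. m \<le> k ^ (2 ^ (CARD('n) - 1)) + t - 1 \<and>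
    (\<forall>S :: (real ^ 'n) set. finite S \<longrightarrow>
      (\<exists>c :: (real ^ 'n) set \<Rightarrow> nat.
         (\<forall>T\<in>tuples t S. c T < k) \<and>
         (\<forall>B. axis_box B \<and> card (S \<inter> B) \<ge> m \<longrightarrow>
            (\<forall>j<k. \<exists>T\<in>tuples t (S \<inter> B). c T = j))))"
proof -
  define M where "M = k ^ (2 ^ (CARD('n) - 1)) + t - 1"
  have "\<forall>S :: (real ^ 'n) set. finite S \<longrightarrow>
      (\<exists>c :: (real ^ 'n) set \<Rightarrow> nat.
         (\<forall>T\<in>tuples t S. c T < k) \<and>
         (\<forall>B. axis_box B \<and> card (S \<inter> B) \<ge> M \<longrightarrow>
            (\<forall>j<k. \<exists>T\<in>tuples t (S \<inter> B). c T = j)))"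
  proof (intro allI impI)
    fix S :: "(real ^ 'n) set"
    assume finS: "finite S"
    interpret ord_setup S "to_nat_on S" "undefined :: 'n"
      by unfold_locales (use finS countable_finite in auto)
    have P1: "\<forall>T\<in>tuples t S. col k T < k"
      using assms(2) unfolding col_def by (simp split: prod.split)
    have P2: "\<forall>B. axis_box B \<and> card (S \<inter> B) \<ge> M \<longrightarrow>
            (\<forall>j<k. \<exists>T\<in>tuples t (S \<inter> B). col k T = j)"
    proof (intro allI impI)
      fix B j assume BB: "axis_box B \<and> M \<le> card (S \<inter> B)" and jk: "j < k"
      show "\<exists>T\<in>tuples t (S \<inter> B). col k T = j"
        by (rule main) (use BB jk assms in \<open>simp_all add: M_def\<close>)
    qed
    show "\<exists>c :: (real ^ 'n) set \<Rightarrow> nat.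
         (\<forall>T\<in>tuples t S. c T < k) \<and>
         (\<forall>B. axis_box B \<and> card (S \<inter> B) \<ge> M \<longrightarrow>
            (\<forall>j<k. \<exists>T\<in>tuples t (S \<inter> B). c T = j))"
      using P1 P2 by (intro exI[of _ "col k"]) simp
  qed
  note X = this
  show ?thesis by (rule exI[of _ M], rule conjI[OF _ X]) (simp add: M_def)
qed

end
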